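(* Let $N\ge3$, $\mu\ge0$, let $K$ satisfy (K$\infty$) and $f$ satisfy (F$\infty$), and let $p>p_S(\beta)$. Let $t_1\in\mathbb{R}$ and let $\tilde w\in C^2(t_1,\infty)$ be a positive solution of $$\tilde w''+\tilde a\tilde w'-\tilde A^{p-1}\tilde w+\tilde L(t)\tilde w^p+\mu\tilde g(t)=0\quad(t>t_1)$$ with $0<\limsup_{t\to\infty}\tilde w(t)<\infty$. Then $\lim_{t\to\infty}\tilde w(t)=\tilde\gamma$ and $\lim_{t\to\infty}\tilde w'(t)=0$.
   Context: (K$\infty$): $K:(0,\infty)\to(0,\infty)$ is continuous and $K(r)=(k_\infty+o(1))r^{\beta}$ as $r\to\infty$ for some $\beta>-2$, $k_\infty>0$. (F$\infty$): $f:(0,\infty)\to[0,\infty)$ is continuous and $f(r)=O(r^{-q})$ as $r\to\infty$ for some $q>N$. $p_S(\beta)=\frac{N+2+2\beta}{N-2}$, $\tilde\theta:=\frac{2+\beta}{p-1}$, $\tilde c:=N-2-\tilde\theta$, $\tilde a:=N-2-2\tilde\theta$, $\tilde A:=(\tilde\theta\tilde c)^{1/(p-1)}$, $\tilde\gamma:=k_\infty^{-1/(p-1)}\tilde A$, $\tilde L(t):=e^{-\beta t}K(e^t)$, $\tilde g(t):=e^{(2+\tilde\theta)t}f(e^t)$. (This equation is satisfied by $\tilde w(t)=e^{\tilde\theta t}u(e^t)$ when $u$ solves $u''+\frac{N-1}{r}u'+K(r)u^p+\mu f(r)=0$.) *)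

theory Defs
  imports "HOL-Analysis.Analysis" "HOL-Library.Landau_Symbols"
begin

definition pS :: "nat \<Rightarrow> real \<Rightarrow> real" where
  "pS N \<beta> = (real N + 2 + 2 * \<beta>) / (real N - 2)"

definition theta_t :: "real \<Rightarrow> real \<Rightarrow> real" where
  "theta_t \<beta> p = (2 + \<beta>) / (p - 1)"

definition c_t :: "nat \<Rightarrow> real \<Rightarrow> real \<Rightarrow> real" where
  "c_t N \<beta> p = real N - 2 - theta_t \<beta> p"

definition a_t :: "nat \<Rightarrow> real \<Rightarrow> real \<Rightarrow> real" where
  "a_t N \<beta> p = real N - 2 - 2 * theta_t \<beta> p"

definition A_t :: "nat \<Rightarrow> real \<Rightarrow> real \<Rightarrow> real" where
  "A_t N \<beta> p = (theta_t \<beta> p * c_t N \<beta> p) powr (1 / (p - 1))"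

definition gamma_t :: "nat \<Rightarrow> real \<Rightarrow> real \<Rightarrow> real \<Rightarrow> real" where
  "gamma_t N \<beta> p kinf = kinf powr (- 1 / (p - 1)) * A_t N \<beta> p"

definition L_t :: "(real \<Rightarrow> real) \<Rightarrow> real \<Rightarrow> real \<Rightarrow> real" where
  "L_t K \<beta> t = exp (- \<beta> * t) * K (exp t)"

definition g_t :: "(real \<Rightarrow> real) \<Rightarrow> real \<Rightarrow> real \<Rightarrow> real \<Rightarrow> real" where
  "g_t f \<beta> p t = exp ((2 + theta_t \<beta> p) * t) * f (exp t)"

end

theory Submission
  imports Defs
begin


lemma mvt_upper:
  fixes f f' :: "real \<Rightarrow> real"
  assumes "a \<le> b" and "\<And>x. a \<le> x \<Longrightarrow> x \<le> b \<Longrightarrow> (f has_real_derivative f' x) (at x)"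
    and "\<And>x. a \<le> x \<Longrightarrow> x \<le> b \<Longrightarrow> f' x \<le> C"
  shows "f b - f a \<le> C * (b - a)"
proof (cases "a = b")
  case True then show ?thesis by simp
next
  case False
  with assms(1) have "a < b" by simp
  from MVT2[OF this assms(2)] obtain z where z: "a < z" "z < b" "f b - f a = (b - a) * f' z"
    by blast
  have "f' z \<le> C" using assms(3)[of z] z by simp
  then show ?thesis using z \<open>a < b\<close> by (simp add: mult.commute mult_right_mono)
qed

lemma mvt_lower:
  fixes f f' :: "real \<Rightarrow> real"
  assumes "a \<le> b" and "\<And>x. a \<le> x \<Longrightarrow> x \<le> b \<Longrightarrow> (f has_real_derivative f' x) (at x)"
    and "\<And>x. a \<le> x \<Longrightarrow> x \<le> b \<Longrightarrow> C \<le> f' x"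
  shows "C * (b - a) \<le> f b - f a"
proof -
  have "(\<lambda>x. - f x) b - (\<lambda>x. - f x) a \<le> (-C) * (b - a)"
  proof (rule mvt_upper[where f'="\<lambda>x. - f' x"])
    show "a \<le> b" by fact
    fix x assume "a \<le> x" "x \<le> b"
    then show "((\<lambda>x. - f x) has_real_derivative - f' x) (at x)" using assms(2) by (intro DERIV_minus) auto
    show "- f' x \<le> - C" using assms(3) \<open>a \<le> x\<close> \<open>x \<le> b\<close> by simp
  qed
  then show ?thesis by simp
qed

lemma mvt_abs:
  fixes f f' :: "real \<Rightarrow> real"
  assumes "a \<le> b" and "\<And>x. a \<le> x \<Longrightarrow> x \<le> b \<Longrightarrow> (f has_real_derivative f' x) (at x)"
    and "\<And>x. a \<le> x \<Longrightarrow> x \<le> b \<Longrightarrow> \<bar>f' x\<bar> \<le> C"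
  shows "\<bar>f b - f a\<bar> \<le> C * (b - a)"
proof -
  have "f b - f a \<le> C * (b - a)"
  proof (rule mvt_upper[OF assms(1,2)])
    fix x assume "a \<le> x" "x \<le> b" then have "\<bar>f' x\<bar> \<le> C" by (rule assms(3))
    then show "f' x \<le> C" by simp
  qed
  moreover have "(-C) * (b - a) \<le> f b - f a"
  proof (rule mvt_lower[OF assms(1,2)])
    fix x assume "a \<le> x" "x \<le> b" then have "\<bar>f' x\<bar> \<le> C" by (rule assms(3))
    then show "-C \<le> f' x" by simp
  qed
  ultimately show ?thesis by simp
qed

lemma mvt_abs':
  fixes f f' :: "real \<Rightarrow> real"
  assumes "\<And>x. min a b \<le> x \<Longrightarrow> x \<le> max a b \<Longrightarrow> (f has_real_derivative f' x) (at x)"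
    and "\<And>x. min a b \<le> x \<Longrightarrow> x \<le> max a b \<Longrightarrow> \<bar>f' x\<bar> \<le> C"
  shows "\<bar>f b - f a\<bar> \<le> C * \<bar>b - a\<bar>"
proof (cases "a \<le> b")
  case True then show ?thesis using mvt_abs[of a b f f' C] assms by (simp add: min_def max_def)
next
  case False
  then have "\<bar>f a - f b\<bar> \<le> C * (a - b)" using mvt_abs[of b a f f' C] assms by (simp add: min_def max_def)
  then show ?thesis using False by (simp add: abs_minus_commute)
qed

lemma floor_aux: "0 \<le> (x::real) \<Longrightarrow> real (nat \<lfloor>x\<rfloor>) \<le> x \<and> x < real (nat \<lfloor>x\<rfloor>) + 1"
proof -
  assume x: "0 \<le> x"
  then have "0 \<le> \<lfloor>x\<rfloor>" by simp
  then have "real (nat \<lfloor>x\<rfloor>) = real_of_int \<lfloor>x\<rfloor>" by simp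
  then show ?thesis using floor_correct[of x] by simp
qed


lemma avoid1:
  fixes x1 d j x z :: real
  assumes "x1 + (2*j-1)*d \<le> x" "x \<le> x1 + 2*j*d" "\<not> (x1 + (2*j - 3/2)*d < z \<and> z < x1 + (2*j+1/2)*d)"
  shows "d/2 \<le> \<bar>x - z\<bar>"
  using assms by (auto simp: abs_if algebra_simps)

lemma avoid:
  fixes x1 x2 u v :: real assumes "x1 < x2"
  shows "\<exists>c1 c2 \<rho>0. x1 < c1 \<and> c1 < c2 \<and> c2 < x2 \<and> \<rho>0 > 0 \<and>
     (\<forall>x. c1 \<le> x \<longrightarrow> x \<le> c2 \<longrightarrow> \<rho>0 \<le> \<bar>x - u\<bar> \<and> \<rho>0 \<le> \<bar>x - v\<bar>)"
proof -
  define d where "d = (x2 - x1) / 7"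
  have d: "d > 0" using assms unfolding d_def by simp
  have x2: "x2 = x1 + 7 * d" unfolding d_def by (simp add: field_simps)
  define N where "N j z \<longleftrightarrow> (x1 + (2*j - 3/2)*d < z \<and> z < x1 + (2*j+1/2)*d)" for j z :: real
  have good: "\<exists>c1 c2 \<rho>0. x1 < c1 \<and> c1 < c2 \<and> c2 < x2 \<and> \<rho>0 > 0 \<and>
     (\<forall>x. c1 \<le> x \<longrightarrow> x \<le> c2 \<longrightarrow> \<rho>0 \<le> \<bar>x - u\<bar> \<and> \<rho>0 \<le> \<bar>x - v\<bar>)"
    if j: "j \<in> {1,2,3}" and nu: "\<not> N j u" and nv: "\<not> N j v" for j
  proof (intro exI conjI allI impI)
    show "x1 < x1 + (2*j-1)*d" "x1 + (2*j-1)*d < x1 + 2*j*d" "x1 + 2*j*d < x2" "d/2 > 0"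
      using j d x2 by auto
    fix x assume "x1 + (2*j-1)*d \<le> x" "x \<le> x1 + 2*j*d"
    then show "d/2 \<le> \<bar>x - u\<bar>" "d/2 \<le> \<bar>x - v\<bar>" using avoid1 nu nv unfolding N_def by blast+
  qed
  have dis: "\<not> (N i z \<and> N j z)" if "i \<in> {1,2,3::real}" "j \<in> {1,2,3}" "i \<noteq> j" for i j z
    using that d unfolding N_def by auto
  show ?thesis
  proof (cases "\<not> N 1 u \<and> \<not> N 1 v")
    case True then show ?thesis using good[of 1] by simp
  next
    case F1: False
    show ?thesis
    proof (cases "\<not> N 2 u \<and> \<not> N 2 v")
      case True then show ?thesis using good[of 2] by simp
    next
      case False
      then have "\<not> N 3 u \<and> \<not> N 3 v" using F1 dis[of 1 3] dis[of 2 3] dis[of 1 2] by auto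
      then show ?thesis using good[of 3] by simp
    qed
  qed
qed

locale osc =
  fixes w w' w'' e :: "real \<Rightarrow> real" and a \<alpha> k p M \<gamma> T0 y0 :: real
  assumes a_pos: "a > 0" and al_pos: "\<alpha> > 0" and k_pos: "k > 0" and p_gt: "p > 1"
    and g_pos: "\<gamma> > 0" and g_eq: "k * \<gamma> powr (p - 1) = \<alpha>" and g_M: "\<gamma> < M"
    and y0_pos: "y0 > 0" and freq: "\<And>T. \<exists>t\<ge>T. w t > y0"
    and d1: "\<And>t. t \<ge> T0 \<Longrightarrow> (w has_real_derivative w' t) (at t)"
    and d2: "\<And>t. t \<ge> T0 \<Longrightarrow> (w' has_real_derivative w'' t) (at t)"
    and wpos: "\<And>t. t \<ge> T0 \<Longrightarrow> 0 < w t" and wM: "\<And>t. t \<ge> T0 \<Longrightarrow> w t \<le> M"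
    and eq: "\<And>t. t \<ge> T0 \<Longrightarrow> w'' t = - a * w' t + (\<alpha> * w t - k * w t powr p) + e t"
    and e_lim: "(e \<longlongrightarrow> 0) at_top" and e_bnd: "\<And>t. t \<ge> T0 \<Longrightarrow> \<bar>e t\<bar> \<le> 1"
begin

definition phi :: "real \<Rightarrow> real" where "phi s = \<alpha> * s - k * s powr p"
definition Fp :: "real \<Rightarrow> real" where "Fp s = - (\<alpha> * s^2 / 2) + k * s powr (p + 1) / (p + 1)"
definition E :: "real \<Rightarrow> real" where "E t = (w' t)^2 / 2 + Fp (w t)"
definition Phi :: real where "Phi = \<alpha> * M + k * M powr p"
definition Lphi :: real where "Lphi = \<alpha> + k * p * M powr (p - 1)"

lemma M_pos: "M > 0" using g_pos g_M by simp

lemma Phi_pos: "Phi > 0" unfolding Phi_def using al_pos k_pos M_pos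
  by (simp add: add_pos_nonneg)

lemma Lphi_pos: "Lphi > 0" unfolding Lphi_def using al_pos k_pos M_pos p_gt
  by (simp add: add_pos_nonneg)

lemma phi_bnd: assumes "0 < s" "s \<le> M" shows "\<bar>phi s\<bar> \<le> Phi"
proof -
  have "s powr p \<le> M powr p" using assms p_gt by (intro powr_mono2) auto
  then have "k * s powr p \<le> k * M powr p" using k_pos by simp
  moreover have "\<alpha> * s \<le> \<alpha> * M" using assms al_pos by simp
  moreover have "0 \<le> k * s powr p" using k_pos by simp
  moreover have "0 \<le> \<alpha> * s" using al_pos assms by simp
  ultimately show ?thesis unfolding phi_def Phi_def by linarith
qed

lemma phi_deriv: assumes "s > 0" shows "(phi has_real_derivative (\<alpha> - k * (p * s powr (p - 1)))) (at s)"
  unfolding phi_def[abs_def] using assms p_gt by (auto intro!: derivative_eq_intros)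

lemma Fp_deriv: assumes "s > 0" shows "(Fp has_real_derivative (- phi s)) (at s)"
proof -
  have "(Fp has_real_derivative (- (\<alpha> * s) + k * s powr p)) (at s)"
    unfolding Fp_def[abs_def] using assms p_gt by (auto intro!: derivative_eq_intros)
  then show ?thesis unfolding phi_def by simp
qed

lemma phi_lip: assumes "0 < x" "x \<le> M" "0 < y" "y \<le> M" shows "\<bar>phi x - phi y\<bar> \<le> Lphi * \<bar>x - y\<bar>"
proof (rule mvt_abs'[where f' = "\<lambda>s. \<alpha> - k * (p * s powr (p - 1))"])
  fix s assume s: "min y x \<le> s" "s \<le> max y x"
  then have s0: "s > 0" "s \<le> M" using assms by (auto simp: min_def max_def split: if_splits)
  show "(phi has_real_derivative \<alpha> - k * (p * s powr (p - 1))) (at s)" by (rule phi_deriv[OF s0(1)])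
  have "s powr (p - 1) \<le> M powr (p - 1)" using s0 p_gt by (intro powr_mono2) auto
  then have "k * (p * s powr (p - 1)) \<le> k * p * M powr (p - 1)" using k_pos p_gt
    by (simp add: mult_left_mono)
  moreover have "0 \<le> k * (p * s powr (p - 1))" using k_pos p_gt by simp
  ultimately show "\<bar>\<alpha> - k * (p * s powr (p - 1))\<bar> \<le> Lphi" unfolding Lphi_def using al_pos by linarith
qed

lemma Fp_lip: assumes "0 < x" "x \<le> M" "0 < y" "y \<le> M" shows "\<bar>Fp x - Fp y\<bar> \<le> Phi * \<bar>x - y\<bar>"
proof (rule mvt_abs'[where f' = "\<lambda>s. - phi s"])
  fix s assume s: "min y x \<le> s" "s \<le> max y x"
  then have s0: "s > 0" "s \<le> M" using assms by (auto simp: min_def max_def split: if_splits)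
  show "(Fp has_real_derivative - phi s) (at s)" by (rule Fp_deriv[OF s0(1)])
  show "\<bar>- phi s\<bar> \<le> Phi" using phi_bnd[OF s0] by simp
qed

lemma Fp_small: assumes "0 < s" "s \<le> 1" shows "\<bar>Fp s\<bar> \<le> (\<alpha> + k) * s"
proof -
  have "s powr (p + 1) = s powr p * s" using assms by (simp add: powr_add)
  moreover have "s powr p \<le> 1" using assms p_gt by (intro powr_le1) auto
  ultimately have h1: "s powr (p + 1) \<le> s" using assms by (simp add: mult_left_le_one_le)
  have h2: "0 \<le> s powr (p + 1)" by simp
  have X: "0 \<le> k * s powr (p + 1) * p" using k_pos p_gt h2 by simp
  have "k * s powr (p + 1) \<le> k * s powr (p + 1) * (p + 1)" using X by (simp add: algebra_simps)
  then have "k * s powr (p + 1) / (p + 1) \<le> k * s powr (p + 1)" using p_gt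
    by (simp add: divide_le_eq)
  also have "\<dots> \<le> k * s" using h1 k_pos by simp
  finally have A: "k * s powr (p + 1) / (p + 1) \<le> k * s" .
  have B: "0 \<le> k * s powr (p + 1) / (p + 1)" using k_pos p_gt h2 by simp
  have C: "s^2 \<le> s" using assms by (simp add: power2_eq_square mult_left_le_one_le)
  then have "\<alpha> * s^2 \<le> \<alpha> * s" using al_pos by (intro mult_left_mono) auto
  then have D: "\<alpha> * s^2 / 2 \<le> \<alpha> * s" using al_pos assms by simp
  have D2: "0 \<le> \<alpha> * s^2 / 2" using al_pos by simp
  have D3: "(\<alpha> + k) * s = \<alpha> * s + k * s" by (simp add: distrib_right)
  have D4: "0 \<le> \<alpha> * s" "0 \<le> k * s" using al_pos k_pos assms by auto
  show ?thesis unfolding Fp_def abs_le_iff D3 using A B D D2 D4 by linarith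
qed


definition B1 :: real where "B1 = 2 * (Phi + 1) / a + \<bar>w' T0\<bar> + 1"
definition B2 :: real where "B2 = a * B1 + Phi + 1"

lemma eq': "t \<ge> T0 \<Longrightarrow> w'' t = - a * w' t + phi (w t) + e t"
  using eq unfolding phi_def by simp

lemma rhs_bnd: assumes "t \<ge> T0" shows "\<bar>phi (w t) + e t\<bar> \<le> Phi + 1"
  using phi_bnd[OF wpos[OF assms] wM[OF assms]] e_bnd[OF assms] by simp

lemma exp_aux:
  assumes "t \<ge> T0" "exp (a * t) * X \<le> exp (a * T0) * Y" shows "X \<le> \<bar>Y\<bar>"
proof (cases "X \<le> 0")
  case True then show ?thesis by simp
next
  case False
  have "exp (a * T0) \<le> exp (a * t)" using assms(1) a_pos by simp
  then have "exp (a * T0) * \<bar>Y\<bar> \<le> exp (a * t) * \<bar>Y\<bar>" by (simp add: mult_right_mono)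
  moreover have "exp (a * T0) * Y \<le> exp (a * T0) * \<bar>Y\<bar>" by simp
  ultimately have "exp (a * t) * X \<le> exp (a * t) * \<bar>Y\<bar>" using assms(2) by linarith
  then show ?thesis by simp
qed

lemma B1_pos: "B1 > 0" unfolding B1_def using Phi_pos a_pos by (simp add: add_pos_nonneg)
lemma B2_pos: "B2 > 0" unfolding B2_def using Phi_pos a_pos B1_pos by (simp add: add_pos_nonneg)

lemma wp_bnd: assumes "t \<ge> T0" shows "\<bar>w' t\<bar> \<le> B1"
proof -
  define H where "H = Phi + 1"
  define u where "u t = exp (a * t) * (w' t - H / a)" for t
  define v where "v t = exp (a * t) * (w' t + H / a)" for t
  have "u T0 \<ge> u t"
  proof (rule DERIV_nonpos_imp_nonincreasing[OF assms])
    fix x assume x: "T0 \<le> x" "x \<le> t"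
    have D: "(u has_real_derivative (a * exp (a * x) * (w' x - H / a) + exp (a * x) * w'' x)) (at x)"
      unfolding u_def[abs_def] using d2[OF x(1)] by (auto intro!: derivative_eq_intros)
    have R: "a * w' x - H + w'' x = phi (w x) + e x - H" using eq'[OF x(1)] by simp
    have "a * exp (a * x) * (w' x - H / a) + exp (a * x) * w'' x = exp (a * x) * (a * w' x - H + w'' x)"
      using a_pos by (simp add: field_simps)
    also have "\<dots> = exp (a * x) * (phi (w x) + e x - H)" using R by simp
    also have "\<dots> \<le> 0"
    proof -
      have "phi (w x) + e x - H \<le> 0" using rhs_bnd[OF x(1)] unfolding H_def by (simp add: abs_le_iff)
      then show ?thesis by (simp add: mult_nonneg_nonpos)
    qed
    finally show "\<exists>y. (u has_real_derivative y) (at x) \<and> y \<le> 0" using D by blast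
  qed
  then have "w' t - H / a \<le> \<bar>w' T0 - H / a\<bar>" unfolding u_def by (intro exp_aux[OF assms]) simp
  moreover have "v T0 \<le> v t"
  proof (rule DERIV_nonneg_imp_nondecreasing[OF assms])
    fix x assume x: "T0 \<le> x" "x \<le> t"
    have D: "(v has_real_derivative (a * exp (a * x) * (w' x + H / a) + exp (a * x) * w'' x)) (at x)"
      unfolding v_def[abs_def] using d2[OF x(1)] by (auto intro!: derivative_eq_intros)
    have R: "a * w' x + H + w'' x = phi (w x) + e x + H" using eq'[OF x(1)] by simp
    have "a * exp (a * x) * (w' x + H / a) + exp (a * x) * w'' x = exp (a * x) * (a * w' x + H + w'' x)"
      using a_pos by (simp add: field_simps)
    also have "\<dots> = exp (a * x) * (phi (w x) + e x + H)" using R by simp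
    also have "\<dots> \<ge> 0"
    proof -
      have "phi (w x) + e x + H \<ge> 0" using rhs_bnd[OF x(1)] unfolding H_def by (simp add: abs_le_iff)
      then show ?thesis by simp
    qed
    finally show "\<exists>y. (v has_real_derivative y) (at x) \<and> y \<ge> 0" using D by blast
  qed
  then have "- (w' t + H / a) \<le> \<bar>- (w' T0 + H / a)\<bar>" unfolding v_def by (intro exp_aux[OF assms]) (simp add: algebra_simps)
  moreover have "\<bar>w' T0 - H / a\<bar> \<le> \<bar>w' T0\<bar> + H / a" "\<bar>- (w' T0 + H / a)\<bar> \<le> \<bar>w' T0\<bar> + H / a"
  proof -
    have Hp: "H / a > 0" unfolding H_def using a_pos Phi_pos by simp
    show "\<bar>w' T0 - H / a\<bar> \<le> \<bar>w' T0\<bar> + H / a" using Hp abs_triangle_ineq4[of "w' T0" "H/a"] by simp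
    show "\<bar>- (w' T0 + H / a)\<bar> \<le> \<bar>w' T0\<bar> + H / a" using Hp abs_triangle_ineq[of "w' T0" "H/a"] by simp
  qed
  ultimately have "w' t \<le> 2 * H / a + \<bar>w' T0\<bar>" "- w' t \<le> 2 * H / a + \<bar>w' T0\<bar>" by linarith+
  then show ?thesis unfolding B1_def H_def[symmetric] by (simp add: abs_le_iff)
qed

lemma wpp_bnd: assumes "t \<ge> T0" shows "\<bar>w'' t\<bar> \<le> B2"
proof -
  have "\<bar>a * w' t\<bar> \<le> a * B1" using wp_bnd[OF assms] a_pos by (simp add: abs_mult)
  then show ?thesis using eq'[OF assms] rhs_bnd[OF assms] unfolding B2_def by (simp add: abs_le_iff)
qed

lemma w_lip: assumes "T0 \<le> x" "T0 \<le> y" shows "\<bar>w y - w x\<bar> \<le> B1 * \<bar>y - x\<bar>"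
proof (rule mvt_abs'[where f'=w'])
  fix s assume "min x y \<le> s" "s \<le> max x y"
  then have s: "T0 \<le> s" using assms by linarith
  show "(w has_real_derivative w' s) (at s)" by (rule d1[OF s])
  show "\<bar>w' s\<bar> \<le> B1" by (rule wp_bnd[OF s])
qed

lemma wp_lip: assumes "T0 \<le> x" "T0 \<le> y" shows "\<bar>w' y - w' x\<bar> \<le> B2 * \<bar>y - x\<bar>"
proof (rule mvt_abs'[where f'=w''])
  fix s assume "min x y \<le> s" "s \<le> max x y"
  then have s: "T0 \<le> s" using assms by linarith
  show "(w' has_real_derivative w'' s) (at s)" by (rule d2[OF s])
  show "\<bar>w'' s\<bar> \<le> B2" by (rule wpp_bnd[OF s])
qed

lemma E_deriv: assumes "t \<ge> T0" shows "(E has_real_derivative (- a * (w' t)^2 + e t * w' t)) (at t)"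
proof -
  have A: "((\<lambda>t. Fp (w t)) has_real_derivative (- phi (w t)) * w' t) (at t)"
    by (rule DERIV_chain2[OF Fp_deriv[OF wpos[OF assms]] d1[OF assms]])
  have B: "((\<lambda>t. (w' t)^2 / 2) has_real_derivative w' t * w'' t) (at t)"
    using d2[OF assms] by (auto intro!: derivative_eq_intros)
  have "(E has_real_derivative (w' t * w'' t + (- phi (w t)) * w' t)) (at t)"
    unfolding E_def[abs_def] by (rule DERIV_add[OF B A])
  moreover have "w' t * w'' t + (- phi (w t)) * w' t = - a * (w' t)^2 + e t * w' t"
    unfolding eq'[OF assms] by (simp add: algebra_simps power2_eq_square)
  ultimately show ?thesis by simp
qed

lemma quad1: assumes "\<bar>ee\<bar> \<le> \<epsilon>" shows "- a * v^2 + ee * v \<le> \<epsilon>^2 / (4 * a)"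
proof -
  have "0 \<le> (2 * a * v - ee)^2" by simp
  then have "4 * a * (- a * v^2 + ee * v) \<le> ee^2" by (simp add: power2_eq_square algebra_simps)
  moreover have "\<bar>ee\<bar>^2 \<le> \<epsilon>^2" by (rule power_mono) (use assms in auto)
  then have "ee^2 \<le> \<epsilon>^2" by simp
  ultimately have "4 * a * (- a * v^2 + ee * v) \<le> \<epsilon>^2" by linarith
  then show ?thesis using a_pos by (simp add: pos_le_divide_eq mult.commute)
qed

lemma quad2: assumes "\<bar>ee\<bar> \<le> \<epsilon>" "\<epsilon> \<le> a * \<eta> / 4" "\<eta> / 2 \<le> \<bar>v\<bar>" "\<eta> > 0"
  shows "- a * v^2 + ee * v \<le> - (a * \<eta>^2 / 8)"
proof -
  have "ee * v \<le> \<bar>ee\<bar> * \<bar>v\<bar>" by (simp add: abs_mult[symmetric])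
  also have "\<dots> \<le> (a * \<eta> / 4) * \<bar>v\<bar>" using assms by (intro mult_right_mono) auto
  finally have 1: "ee * v \<le> (a * \<eta> / 4) * \<bar>v\<bar>" .
  have "0 \<le> (\<bar>v\<bar> - \<eta>/2) * (\<bar>v\<bar> + \<eta>/4)" using assms by (intro mult_nonneg_nonneg) auto
  then have "0 \<le> a * ((\<bar>v\<bar> - \<eta>/2) * (\<bar>v\<bar> + \<eta>/4))" using a_pos by simp
  then have "0 \<le> a * v^2 - (a * \<eta> / 4) * \<bar>v\<bar> - a * \<eta>^2 / 8"
    by (simp add: algebra_simps power2_eq_square abs_mult_self_eq)
  then show ?thesis using 1 by linarith
qed

lemma E_rise: assumes "T0 \<le> x" "x \<le> y" "\<And>t. x \<le> t \<Longrightarrow> t \<le> y \<Longrightarrow> \<bar>e t\<bar> \<le> \<epsilon>"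
  shows "E y - E x \<le> \<epsilon>^2 / (4 * a) * (y - x)"
proof (rule mvt_upper[OF assms(2), where f'="\<lambda>t. - a * (w' t)^2 + e t * w' t"])
  fix t assume t: "x \<le> t" "t \<le> y"
  show "(E has_real_derivative - a * (w' t)\<^sup>2 + e t * w' t) (at t)" using t assms(1) E_deriv by simp
  show "- a * (w' t)\<^sup>2 + e t * w' t \<le> \<epsilon>\<^sup>2 / (4 * a)" by (rule quad1) (rule assms(3)[OF t])
qed

lemma E_drop: assumes "T0 \<le> x" "x \<le> y" "\<eta> > 0" "\<epsilon> \<le> a * \<eta> / 4"
  "\<And>t. x \<le> t \<Longrightarrow> t \<le> y \<Longrightarrow> \<bar>e t\<bar> \<le> \<epsilon>" "\<And>t. x \<le> t \<Longrightarrow> t \<le> y \<Longrightarrow> \<eta> / 2 \<le> \<bar>w' t\<bar>"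
  shows "E y - E x \<le> - (a * \<eta>^2 / 8) * (y - x)"
proof (rule mvt_upper[OF assms(2), where f'="\<lambda>t. - a * (w' t)^2 + e t * w' t"])
  fix t assume t: "x \<le> t" "t \<le> y"
  show "(E has_real_derivative - a * (w' t)\<^sup>2 + e t * w' t) (at t)" using t assms(1) E_deriv by simp
  show "- a * (w' t)\<^sup>2 + e t * w' t \<le> - (a * \<eta>^2 / 8)"
    by (rule quad2[OF assms(5)[OF t] assms(4) assms(6)[OF t] assms(3)])
qed


lemma KL: assumes t: "T0 \<le> t" and eta: "0 \<le> \<eta>"
  and hw: "\<And>s. t \<le> s \<Longrightarrow> s \<le> t + 1 \<Longrightarrow> \<bar>w' s\<bar> \<le> \<eta>"
  and he: "\<And>s. t \<le> s \<Longrightarrow> s \<le> t + 1 \<Longrightarrow> \<bar>e s\<bar> \<le> \<epsilon>"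
  shows "\<bar>phi (w t)\<bar> \<le> \<eta> * (2 + a + Lphi) + \<epsilon>"
proof -
  have "t < t + 1" by simp
  from MVT2[OF this, of w' w''] d2 t obtain z where z: "t < z" "z < t + 1" "w' (t + 1) - w' t = (t + 1 - t) * w'' z"
    by auto
  have z0: "T0 \<le> z" using z t by simp
  have "\<bar>w'' z\<bar> \<le> 2 * \<eta>" using z(3) hw[of t] hw[of "t+1"] by simp
  moreover have "phi (w z) = w'' z + a * w' z - e z" using eq'[OF z0] by simp
  moreover have "\<bar>a * w' z\<bar> \<le> a * \<eta>" using hw[of z] z a_pos by (simp add: abs_mult)
  moreover have "\<bar>e z\<bar> \<le> \<epsilon>" using he[of z] z by simp
  ultimately have A: "\<bar>phi (w z)\<bar> \<le> 2 * \<eta> + a * \<eta> + \<epsilon>" by (simp add: abs_le_iff)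
  have "\<bar>w z - w t\<bar> \<le> \<eta> * (z - t)"
  proof (rule mvt_abs[where f'=w'])
    show "t \<le> z" using z by simp
    fix x assume x: "t \<le> x" "x \<le> z"
    then have x0: "T0 \<le> x" using t by simp
    show "(w has_real_derivative w' x) (at x)" by (rule d1[OF x0])
    show "\<bar>w' x\<bar> \<le> \<eta>" using x z by (intro hw) auto
  qed
  also have "\<dots> \<le> \<eta> * 1" using z eta by (intro mult_left_mono) auto
  finally have B: "\<bar>w z - w t\<bar> \<le> \<eta>" by simp
  have "\<bar>phi (w t) - phi (w z)\<bar> \<le> Lphi * \<bar>w t - w z\<bar>"
    by (rule phi_lip[OF wpos[OF t] wM[OF t] wpos[OF z0] wM[OF z0]])
  also have "\<dots> \<le> Lphi * \<eta>" using B Lphi_pos by (intro mult_left_mono) (auto simp: abs_minus_commute)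
  finally have C: "\<bar>phi (w t) - phi (w z)\<bar> \<le> Lphi * \<eta>" .
  have "\<eta> * (2 + a + Lphi) + \<epsilon> = 2 * \<eta> + a * \<eta> + \<epsilon> + Lphi * \<eta>" by (simp add: algebra_simps)
  then show ?thesis using A C by (simp add: abs_le_iff)
qed

definition kap :: "real \<Rightarrow> real" where
  "kap \<rho> = \<rho> * k * min ((\<gamma> + \<rho>) powr (p - 1) - \<gamma> powr (p - 1)) (\<gamma> powr (p - 1) - (\<gamma> - \<rho>) powr (p - 1))"

lemma kap_pos: assumes "0 < \<rho>" "\<rho> \<le> \<gamma> / 2" shows "kap \<rho> > 0"
proof -
  have "\<gamma> powr (p - 1) < (\<gamma> + \<rho>) powr (p - 1)" using assms g_pos p_gt by (intro powr_less_mono2) auto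
  moreover have "(\<gamma> - \<rho>) powr (p - 1) < \<gamma> powr (p - 1)" using assms g_pos p_gt by (intro powr_less_mono2) auto
  ultimately show ?thesis unfolding kap_def using assms k_pos by simp
qed

lemma phi_factor: assumes "s > 0" shows "phi s = s * k * (\<gamma> powr (p - 1) - s powr (p - 1))"
proof -
  have "s powr p = s * s powr (p - 1)" using powr_add[of s 1 "p - 1"] assms by simp
  then have "phi s = \<alpha> * s - k * (s * s powr (p - 1))" unfolding phi_def by simp
  also have "\<dots> = (k * \<gamma> powr (p - 1)) * s - k * (s * s powr (p - 1))" using g_eq by simp
  also have "\<dots> = s * k * (\<gamma> powr (p - 1) - s powr (p - 1))" by (simp add: algebra_simps)
  finally show ?thesis .
qed

lemma phi_away: assumes r: "0 < \<rho>" "\<rho> \<le> \<gamma> / 2" and s: "\<rho> \<le> s" "\<rho> \<le> \<bar>s - \<gamma>\<bar>"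
  shows "kap \<rho> \<le> \<bar>phi s\<bar>"
proof -
  define m where "m = min ((\<gamma> + \<rho>) powr (p - 1) - \<gamma> powr (p - 1)) (\<gamma> powr (p - 1) - (\<gamma> - \<rho>) powr (p - 1))"
  have "\<gamma> powr (p - 1) \<le> (\<gamma> + \<rho>) powr (p - 1)" using r g_pos p_gt by (intro powr_mono2) auto
  moreover have "(\<gamma> - \<rho>) powr (p - 1) \<le> \<gamma> powr (p - 1)" using r g_pos p_gt by (intro powr_mono2) auto
  ultimately have m0: "m \<ge> 0" unfolding m_def by simp
  have s0: "s > 0" using r s by simp
  have "m \<le> \<bar>\<gamma> powr (p - 1) - s powr (p - 1)\<bar>"
  proof (cases "s \<ge> \<gamma>")
    case True
    then have "\<gamma> + \<rho> \<le> s" using s by simp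
    then have "(\<gamma> + \<rho>) powr (p - 1) \<le> s powr (p - 1)" using r g_pos p_gt by (intro powr_mono2) auto
    then show ?thesis unfolding m_def by simp
  next
    case False
    then have "s \<le> \<gamma> - \<rho>" using s by simp
    then have "s powr (p - 1) \<le> (\<gamma> - \<rho>) powr (p - 1)" using s0 p_gt by (intro powr_mono2) auto
    then show ?thesis unfolding m_def by simp
  qed
  moreover have "\<rho> * k \<le> s * k" using s k_pos by simp
  ultimately have "\<rho> * k * m \<le> s * k * \<bar>\<gamma> powr (p - 1) - s powr (p - 1)\<bar>"
    using s0 r k_pos m0 by (intro mult_mono) auto
  then show ?thesis unfolding kap_def m_def[symmetric] phi_factor[OF s0] using s0 k_pos by (simp add: abs_mult)
qed

lemma E_Fp: assumes "T0 \<le> t" shows "\<bar>E t - Fp (w t)\<bar> \<le> (w' t)^2 / 2"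
  unfolding E_def by simp



lemma e_eventually: assumes "\<epsilon> > 0" obtains T1 where "\<And>t. t \<ge> T1 \<Longrightarrow> \<bar>e t\<bar> \<le> \<epsilon>"
proof -
  have "eventually (\<lambda>t. dist (e t) 0 < \<epsilon>) at_top" using e_lim assms by (rule tendstoD)
  then obtain T1 where "\<And>t. t \<ge> T1 \<Longrightarrow> dist (e t) 0 < \<epsilon>" unfolding eventually_at_top_linorder by blast
  then show ?thesis using that by fastforce
qed

lemma no_upcross:
  assumes c12: "c1 < c2" and r0: "\<rho>0 > 0"
    and far: "\<And>x. c1 \<le> x \<Longrightarrow> x \<le> c2 \<Longrightarrow> \<rho>0 \<le> \<bar>x\<bar> \<and> \<rho>0 \<le> \<bar>x - Fp \<gamma>\<bar>"
  shows "\<exists>T. \<forall>s0\<ge>T. E s0 \<le> c1 \<longrightarrow> (\<forall>t\<ge>s0. E t < c2)"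
proof -
  define \<rho> where "\<rho> = min (\<gamma>/2) (min 1 (min (\<rho>0 / (2*(\<alpha>+k)+1)) (\<rho>0/(2*Phi+1))))"
  have ak: "\<alpha> + k > 0" using al_pos k_pos by simp
  have \<rho>1: "0 < \<rho>" unfolding \<rho>_def using g_pos r0 ak Phi_pos by auto
  have \<rho>2: "\<rho> \<le> \<gamma>/2" unfolding \<rho>_def by (rule min.cobounded1)
  have \<rho>3: "\<rho> \<le> 1" unfolding \<rho>_def by (intro min.coboundedI2 min.cobounded1)
  note \<rho> = \<rho>1 \<rho>2 \<rho>3
  have "\<rho> \<le> \<rho>0 / (2*(\<alpha>+k)+1)" unfolding \<rho>_def by (intro min.coboundedI2 min.cobounded1)
  then have "\<rho> * (2*(\<alpha>+k)+1) \<le> \<rho>0" using ak by (simp add: le_divide_eq)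
  then have \<rho>4: "(\<alpha>+k)*\<rho> < \<rho>0/2" using \<rho> by (simp add: algebra_simps)
  have "\<rho> \<le> \<rho>0/(2*Phi+1)" unfolding \<rho>_def by (intro min.coboundedI2 min.cobounded2)
  then have "\<rho> * (2*Phi+1) \<le> \<rho>0" using Phi_pos by (simp add: le_divide_eq)
  then have \<rho>5: "Phi*\<rho> < \<rho>0/2" using \<rho> by (simp add: algebra_simps)
  define \<kappa> where "\<kappa> = kap \<rho>"
  have \<kappa>: "\<kappa> > 0" unfolding \<kappa>_def using kap_pos \<rho> by simp
  have cL: "2 + a + Lphi > 0" using a_pos Lphi_pos by simp
  define \<eta> where "\<eta> = min 1 (min (\<kappa>/(4*(2+a+Lphi))) (\<rho>0/2))"
  have \<eta>1: "\<eta> > 0" unfolding \<eta>_def using \<kappa> cL r0 by auto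
  have \<eta>2: "\<eta> \<le> 1" unfolding \<eta>_def by (rule min.cobounded1)
  have \<eta>3: "\<eta> \<le> \<rho>0/2" unfolding \<eta>_def by (intro min.coboundedI2 min.cobounded2)
  note \<eta> = \<eta>1 \<eta>2 \<eta>3
  have "\<eta> \<le> \<kappa>/(4*(2+a+Lphi))" unfolding \<eta>_def by (intro min.coboundedI2 min.cobounded1)
  then have "\<eta> * (4*(2+a+Lphi)) \<le> \<kappa>" using cL by (simp add: le_divide_eq)
  then have \<eta>4: "\<eta> * (2+a+Lphi) \<le> \<kappa>/4" by (simp add: algebra_simps)
  define r where "r = \<eta> / (2 * B2)"
  have r: "r > 0" "B2 * r = \<eta> / 2" unfolding r_def using \<eta> B2_pos by auto
  define D0 where "D0 = a * \<eta>^2 / 8 * r"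
  have D0: "D0 > 0" unfolding D0_def using a_pos \<eta> r by simp
  define H where "H = 1 + r"
  have H: "H > 0" "H \<ge> 1" unfolding H_def using r by auto
  define q0 where "q0 = min D0 ((c2 - c1) / (2 * H))"
  have q01: "q0 > 0" unfolding q0_def using D0 c12 H by auto
  have q02: "q0 \<le> D0" unfolding q0_def by (rule min.cobounded1)
  have "q0 \<le> (c2 - c1) / (2 * H)" unfolding q0_def by (rule min.cobounded2)
  then have q03: "q0 * H \<le> (c2 - c1)/2" using H by (simp add: le_divide_eq mult_ac)
  note q0 = q01 q02 q03
  define \<epsilon> where "\<epsilon> = min (sqrt (4 * a * q0)) (min (a * \<eta> / 4) (\<kappa> / 2))"
  have \<epsilon>1: "\<epsilon> > 0" unfolding \<epsilon>_def using a_pos q0 \<eta> \<kappa> by auto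
  have \<epsilon>2: "\<epsilon> \<le> a * \<eta> / 4" unfolding \<epsilon>_def by (intro min.coboundedI2 min.cobounded1)
  have \<epsilon>3: "\<epsilon> \<le> \<kappa> / 2" unfolding \<epsilon>_def by (intro min.coboundedI2 min.cobounded2)
  note \<epsilon> = \<epsilon>1 \<epsilon>2 \<epsilon>3
  have "\<epsilon> \<le> sqrt (4 * a * q0)" unfolding \<epsilon>_def by (rule min.cobounded1)
  then have "\<epsilon>^2 \<le> (sqrt (4 * a * q0))^2" using \<epsilon> by (intro power_mono) auto
  also have "\<dots> = 4 * a * q0" using a_pos q0 by simp
  finally have "\<epsilon>^2 \<le> 4 * a * q0" .
  define q where "q = \<epsilon>^2 / (4 * a)"
  have q: "q > 0" "q \<le> q0" unfolding q_def using \<epsilon> a_pos \<open>\<epsilon>^2 \<le> 4 * a * q0\<close>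
    by (auto simp: divide_le_eq mult.commute)
  have qD: "q \<le> D0" using q q0 by simp
  have qH: "q * H \<le> (c2 - c1) / 2" using q q0 H by (meson mult_right_mono less_imp_le order_trans)
  obtain T1 where T1: "\<And>t. t \<ge> T1 \<Longrightarrow> \<bar>e t\<bar> \<le> \<epsilon>" using e_eventually[OF \<epsilon>(1)] by blast
  define T where "T = max T0 T1"
  have step: "E (t + H) \<le> E t - D0 + q" if t: "T \<le> t" "c1 \<le> E t" "E t \<le> c2" for t
  proof -
    have tT0: "T0 \<le> t" using t unfolding T_def by simp
    have he: "\<bar>e s\<bar> \<le> \<epsilon>" if "t \<le> s" for s using T1 t that unfolding T_def by simp
    show ?thesis
    proof (cases "\<forall>s. t \<le> s \<and> s \<le> t + 1 \<longrightarrow> \<bar>w' s\<bar> \<le> \<eta>")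
      case True
      have "\<bar>phi (w t)\<bar> \<le> \<eta> * (2 + a + Lphi) + \<epsilon>"
        by (rule KL[OF tT0]) (use True \<eta> he in auto)
      then have "\<bar>phi (w t)\<bar> < kap \<rho>" using \<eta>4 \<epsilon> \<kappa> unfolding \<kappa>_def by simp
      then have "\<not> (\<rho> \<le> w t \<and> \<rho> \<le> \<bar>w t - \<gamma>\<bar>)" using phi_away[OF \<rho>(1,2)] by force
      then have near: "w t < \<rho> \<or> \<bar>w t - \<gamma>\<bar> < \<rho>" by auto
      have "\<bar>w' t\<bar> \<le> \<eta>" using True by simp
      then have "\<bar>w' t\<bar>^2 \<le> \<eta>^2" by (intro power_mono) auto
      moreover have "\<eta>^2 \<le> \<eta>" using \<eta> by (simp add: power2_eq_square mult_left_le_one_le)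
      ultimately have wp2: "(w' t)^2 / 2 \<le> \<rho>0 / 4" using \<eta> by simp
      have Ew: "E t = (w' t)^2 / 2 + Fp (w t)" unfolding E_def by simp
      have "(w' t)^2 \<ge> 0" by simp
      from near show ?thesis
      proof
        assume "w t < \<rho>"
        then have "\<bar>Fp (w t)\<bar> \<le> (\<alpha> + k) * w t" using Fp_small[OF wpos[OF tT0]] \<rho> by simp
        also have "\<dots> \<le> (\<alpha> + k) * \<rho>" using \<open>w t < \<rho>\<close> ak by simp
        finally have FB: "\<bar>Fp (w t)\<bar> < \<rho>0 / 2" using \<rho>4 by simp
        have "\<bar>E t\<bar> \<le> \<bar>(w' t)^2/2\<bar> + \<bar>Fp (w t)\<bar>" unfolding Ew by (rule abs_triangle_ineq)
        then have "\<bar>E t\<bar> < \<rho>0" using FB wp2 by simp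
        then show ?thesis using far[OF t(2,3)] by simp
      next
        assume "\<bar>w t - \<gamma>\<bar> < \<rho>"
        have "\<bar>Fp (w t) - Fp \<gamma>\<bar> \<le> Phi * \<bar>w t - \<gamma>\<bar>"
          by (rule Fp_lip[OF wpos[OF tT0] wM[OF tT0] g_pos]) (use g_M in simp)
        also have "\<dots> \<le> Phi * \<rho>" using \<open>\<bar>w t - \<gamma>\<bar> < \<rho>\<close> Phi_pos by simp
        finally have FB: "\<bar>Fp (w t) - Fp \<gamma>\<bar> < \<rho>0 / 2" using \<rho>5 by simp
        have "E t - Fp \<gamma> = (w' t)^2/2 + (Fp (w t) - Fp \<gamma>)" unfolding Ew by simp
        then have "\<bar>E t - Fp \<gamma>\<bar> \<le> \<bar>(w' t)^2/2\<bar> + \<bar>Fp (w t) - Fp \<gamma>\<bar>" by (simp only: abs_triangle_ineq)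
        then have "\<bar>E t - Fp \<gamma>\<bar> < \<rho>0" using FB wp2 r0 by simp
        then show ?thesis using far[OF t(2,3)] by simp
      qed
    next
      case False
      then obtain s where s: "t \<le> s" "s \<le> t + 1" "\<eta> < \<bar>w' s\<bar>" by auto
      have sT0: "T0 \<le> s" using s tT0 by simp
      have lb: "\<eta> / 2 \<le> \<bar>w' u\<bar>" if u: "s \<le> u" "u \<le> s + r" for u
      proof -
        have "\<bar>w' u - w' s\<bar> \<le> B2 * \<bar>u - s\<bar>" using wp_lip[OF sT0, of u] u sT0 by simp
        also have "\<dots> \<le> B2 * r" using u B2_pos by (intro mult_left_mono) auto
        finally have "\<bar>w' u - w' s\<bar> \<le> \<eta> / 2" using r by simp
        then show ?thesis using s abs_triangle_ineq3[of "w' s" "w' u"] abs_minus_commute[of "w' s" "w' u"] by linarith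
      qed
      have d: "E (s + r) - E s \<le> - (a * \<eta>^2 / 8) * (s + r - s)"
        by (rule E_drop[OF sT0 _ \<eta>(1) \<epsilon>(2)]) (use r he s lb in auto)
      have r1: "E s - E t \<le> q * (s - t)" unfolding q_def
        by (rule E_rise[OF tT0 s(1)]) (use he in auto)
      have r2: "E (t + H) - E (s + r) \<le> q * (t + H - (s + r))" unfolding q_def
        by (rule E_rise) (use sT0 r s he H_def in auto)
      have "q * (s - t) + q * (t + H - (s + r)) = q" unfolding H_def by (simp add: algebra_simps)
      moreover have "- (a * \<eta>^2 / 8) * (s + r - s) = - D0" unfolding D0_def by simp
      ultimately show ?thesis using d r1 r2 by linarith
    qed
  qed
  show ?thesis
  proof (rule exI[of _ T], rule allI, rule impI, rule impI)
    fix s0 assume s0: "T \<le> s0" "E s0 \<le> c1"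
    have nH: "0 \<le> real n * H" for n :: nat using H by simp
    have grid: "E (s0 + real n * H) < c1 + q * H" for n :: nat
    proof (induction n)
      case 0
      have "q * H > 0" using q H by simp
      then show ?case using s0 by simp
    next
      case (Suc n)
      define t where "t = s0 + real n * H"
      have tt: "s0 + real (Suc n) * H = t + H" unfolding t_def by (simp add: algebra_simps)
      have tT: "T \<le> t" unfolding t_def using s0 nH[of n] by simp
      have tT0: "T0 \<le> t" using tT unfolding T_def by simp
      have IH: "E t < c1 + q * H" using Suc unfolding t_def by simp
      show ?case
      proof (cases "E t < c1")
        case True
        have "E (t + H) - E t \<le> \<epsilon>^2 / (4 * a) * (t + H - t)"
          by (rule E_rise[OF tT0]) (use H T1 tT T_def in auto)
        then show ?thesis unfolding tt using True q_def by simp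
      next
        case False
        then have "E (t + H) \<le> E t - D0 + q" using step[OF tT] IH qH by simp
        then show ?thesis unfolding tt using IH qD by simp
      qed
    qed
    show "\<forall>t\<ge>s0. E t < c2"
    proof (intro allI impI)
      fix t assume t: "s0 \<le> t"
      define n where "n = nat \<lfloor>(t - s0) / H\<rfloor>"
      have "real n \<le> (t - s0) / H \<and> (t - s0) / H < real n + 1"
        unfolding n_def using t H by (intro floor_aux) simp
      then have n1: "s0 + real n * H \<le> t" and n2: "t < s0 + real n * H + H" using H
        by (auto simp: field_simps)
      have n0: "T0 \<le> s0 + real n * H" using s0 nH[of n] unfolding T_def by simp
      have "E t - E (s0 + real n * H) \<le> \<epsilon>^2 / (4 * a) * (t - (s0 + real n * H))"
      proof (rule E_rise[OF n0 n1, of \<epsilon>])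
        fix x assume "s0 + real n * H \<le> x" "x \<le> t"
        then have "T1 \<le> x" using s0 nH[of n] unfolding T_def by simp
        then show "\<bar>e x\<bar> \<le> \<epsilon>" by (rule T1)
      qed
      also have "\<dots> \<le> q * H" unfolding q_def[symmetric] using n2 q by (intro mult_left_mono) auto
      finally show "E t < c2" using grid[of n] qH by simp
    qed
  qed
qed


lemma E_bounded: obtains CE where "\<And>t. t \<ge> T0 \<Longrightarrow> \<bar>E t\<bar> \<le> CE"
proof -
  have "\<bar>E t\<bar> \<le> B1^2/2 + \<bar>Fp \<gamma>\<bar> + Phi * M" if t: "t \<ge> T0" for t
  proof -
    have "\<bar>Fp (w t) - Fp \<gamma>\<bar> \<le> Phi * \<bar>w t - \<gamma>\<bar>"
      by (rule Fp_lip[OF wpos[OF t] wM[OF t] g_pos]) (use g_M in simp)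
    also have "\<dots> \<le> Phi * M" using wpos[OF t] wM[OF t] g_pos g_M Phi_pos by (intro mult_left_mono) auto
    finally have 1: "\<bar>Fp (w t)\<bar> \<le> \<bar>Fp \<gamma>\<bar> + Phi * M" by simp
    have "\<bar>w' t\<bar>^2 \<le> B1^2" using wp_bnd[OF t] by (intro power_mono) auto
    then have 2: "(w' t)^2 / 2 \<le> B1^2/2" by simp
    have "\<bar>E t\<bar> \<le> \<bar>(w' t)^2/2\<bar> + \<bar>Fp (w t)\<bar>" unfolding E_def by (rule abs_triangle_ineq)
    then show ?thesis using 1 2 by simp
  qed
  then show ?thesis using that by blast
qed

lemma E_conv: obtains lim0 where "(E \<longlongrightarrow> lim0) at_top"
proof -
  obtain CE where CE: "\<And>t. t \<ge> T0 \<Longrightarrow> \<bar>E t\<bar> \<le> CE" using E_bounded by blast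
  define m1 where "m1 = Liminf at_top (\<lambda>t. ereal (E t))"
  define m2 where "m2 = Limsup at_top (\<lambda>t. ereal (E t))"
  have "eventually (\<lambda>t. ereal (- CE) \<le> ereal (E t)) at_top"
    unfolding eventually_at_top_linorder
  proof (intro exI[of _ T0] allI impI)
    fix t assume "T0 \<le> t" then have "\<bar>E t\<bar> \<le> CE" by (rule CE)
    then show "ereal (- CE) \<le> ereal (E t)" by simp
  qed
  then have m1b: "ereal (- CE) \<le> m1" unfolding m1_def by (rule Liminf_bounded)
  have "eventually (\<lambda>t. ereal (E t) \<le> ereal CE) at_top"
    unfolding eventually_at_top_linorder
  proof (intro exI[of _ T0] allI impI)
    fix t assume "T0 \<le> t" then have "\<bar>E t\<bar> \<le> CE" by (rule CE)
    then show "ereal (E t) \<le> ereal CE" by simp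
  qed
  then have m2b: "m2 \<le> ereal CE" unfolding m2_def by (rule Limsup_bounded)
  have m12: "m1 \<le> m2" unfolding m1_def m2_def by (rule Liminf_le_Limsup) simp
  have "m1 = m2"
  proof (rule ccontr)
    assume "m1 \<noteq> m2"
    with m12 have "m1 < m2" by simp
    then obtain x1 where x1: "m1 < ereal x1" "ereal x1 < m2" using ereal_dense2 by blast
    then obtain x2 where x2: "ereal x1 < ereal x2" "ereal x2 < m2" using ereal_dense2 by blast
    then have "x1 < x2" by simp
    then obtain c1 c2 \<rho>0 where c: "x1 < c1" "c1 < c2" "c2 < x2" "\<rho>0 > 0"
      and far: "\<And>x. c1 \<le> x \<Longrightarrow> x \<le> c2 \<Longrightarrow> \<rho>0 \<le> \<bar>x - 0\<bar> \<and> \<rho>0 \<le> \<bar>x - Fp \<gamma>\<bar>"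
      using avoid[of x1 x2 0 "Fp \<gamma>"] by blast
    obtain T where T: "\<And>s0. s0 \<ge> T \<Longrightarrow> E s0 \<le> c1 \<Longrightarrow> (\<forall>t\<ge>s0. E t < c2)"
      using no_upcross[OF c(2,4)] far by auto
    have "\<exists>s0\<ge>T. E s0 \<le> c1"
    proof (rule ccontr)
      assume "\<not> (\<exists>s0\<ge>T. E s0 \<le> c1)"
      then have "eventually (\<lambda>t. ereal c1 \<le> ereal (E t)) at_top"
        unfolding eventually_at_top_linorder by (intro exI[of _ T]) auto
      then have "ereal c1 \<le> m1" unfolding m1_def by (rule Liminf_bounded)
      then have "ereal c1 < ereal x1" using x1(1) by (rule le_less_trans)
      then show False using c by simp
    qed
    then obtain s0 where "s0 \<ge> T" "E s0 \<le> c1" by blast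
    then have "\<forall>t\<ge>s0. E t < c2" using T by blast
    then have "eventually (\<lambda>t. ereal (E t) \<le> ereal c2) at_top"
      unfolding eventually_at_top_linorder by (intro exI[of _ s0]) auto
    then have "m2 \<le> ereal c2" unfolding m2_def by (rule Limsup_bounded)
    then have "ereal x2 < ereal c2" using x2(2) by (metis less_le_trans)
    then show False using c by simp
  qed
  obtain lim0 where l: "m2 = ereal lim0" using m1b m2b \<open>m1 = m2\<close> by (cases m2) auto
  have "((\<lambda>t. ereal (E t)) \<longlongrightarrow> ereal lim0) at_top"
    by (rule Liminf_eq_Limsup) (use \<open>m1 = m2\<close> l in \<open>simp_all add: m1_def m2_def\<close>)
  then have "(E \<longlongrightarrow> lim0) at_top" by simp
  then show ?thesis by (rule that)
qed


lemma not_ev: assumes "\<not> eventually P at_top" shows "\<exists>t\<ge>T. \<not> P (t::real)"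
  using assms unfolding eventually_at_top_linorder by blast

lemma wp_lim: "(w' \<longlongrightarrow> 0) at_top"
proof (rule tendstoI)
  fix \<eta> :: real assume \<eta>: "\<eta> > 0"
  show "eventually (\<lambda>t. dist (w' t) 0 < \<eta>) at_top"
  proof (rule ccontr)
    assume nev: "\<not> eventually (\<lambda>t. dist (w' t) 0 < \<eta>) at_top"
    obtain lim0 where El: "(E \<longlongrightarrow> lim0) at_top" by (rule E_conv)
    define r where "r = \<eta> / (2 * B2)"
    have r: "r > 0" "B2 * r = \<eta> / 2" unfolding r_def using \<eta> B2_pos by auto
    define D0 where "D0 = a * \<eta>^2 / 8 * r"
    have D0: "D0 > 0" unfolding D0_def using a_pos \<eta> r by simp
    have "eventually (\<lambda>t. dist (E t) lim0 < D0 / 2) at_top" using El D0 by (intro tendstoD) auto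
    then obtain T2 where T2: "\<And>t. t \<ge> T2 \<Longrightarrow> dist (E t) lim0 < D0 / 2"
      unfolding eventually_at_top_linorder by blast
    have ae: "a * \<eta> / 4 > 0" using a_pos \<eta> by simp
    obtain T1 where T1: "\<And>t. t \<ge> T1 \<Longrightarrow> \<bar>e t\<bar> \<le> a * \<eta> / 4" using e_eventually[OF ae] by blast
    obtain t where t: "t \<ge> max T0 (max T1 T2)" "\<not> dist (w' t) 0 < \<eta>" using not_ev[OF nev] by blast
    have tT0: "T0 \<le> t" using t by simp
    have lb: "\<eta> / 2 \<le> \<bar>w' u\<bar>" if u: "t \<le> u" "u \<le> t + r" for u
    proof -
      have "\<bar>w' u - w' t\<bar> \<le> B2 * \<bar>u - t\<bar>" using wp_lip[OF tT0, of u] u tT0 by simp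
      also have "\<dots> \<le> B2 * r" using u B2_pos by (intro mult_left_mono) auto
      finally have "\<bar>w' u - w' t\<bar> \<le> \<eta> / 2" using r by simp
      moreover have "\<eta> \<le> \<bar>w' t\<bar>" using t(2) by simp
      ultimately show ?thesis using abs_triangle_ineq2[of "w' t" "w' u"] abs_minus_commute[of "w' t" "w' u"] by linarith
    qed
    have "E (t + r) - E t \<le> - (a * \<eta>^2 / 8) * (t + r - t)"
    proof (rule E_drop[OF tT0 _ \<eta> order_refl])
      show "t \<le> t + r" using r by simp
      fix x assume x: "t \<le> x" "x \<le> t + r"
      show "\<bar>e x\<bar> \<le> a * \<eta> / 4" using x t by (intro T1) simp
      show "\<eta> / 2 \<le> \<bar>w' x\<bar>" using x by (rule lb)
    qed
    then have "E (t + r) - E t \<le> - D0" unfolding D0_def by simp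
    moreover have "dist (E t) lim0 < D0 / 2" using t by (intro T2) simp
    moreover have "dist (E (t + r)) lim0 < D0 / 2" using t r by (intro T2) simp
    ultimately show False unfolding dist_real_def abs_less_iff by linarith
  qed
qed

lemma w_lim: "(w \<longlongrightarrow> \<gamma>) at_top"
proof (rule tendstoI)
  fix \<epsilon>' :: real assume \<epsilon>': "\<epsilon>' > 0"
  define \<rho> where "\<rho> = min (\<gamma>/2) (min (y0/2) \<epsilon>')"
  have \<rho>1: "0 < \<rho>" unfolding \<rho>_def using g_pos y0_pos \<epsilon>' by auto
  have \<rho>2: "\<rho> \<le> \<gamma>/2" unfolding \<rho>_def by (rule min.cobounded1)
  have "\<rho> \<le> y0/2" unfolding \<rho>_def by (intro min.coboundedI2 min.cobounded1)
  then have \<rho>3: "\<rho> < y0" using y0_pos by simp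
  have \<rho>4: "\<rho> \<le> \<epsilon>'" unfolding \<rho>_def by (intro min.coboundedI2 min.cobounded2)
  define \<kappa> where "\<kappa> = kap \<rho>"
  have \<kappa>: "\<kappa> > 0" unfolding \<kappa>_def using kap_pos \<rho>1 \<rho>2 by simp
  have cL: "2 + a + Lphi > 0" using a_pos Lphi_pos by simp
  define \<eta> where "\<eta> = \<kappa> / (2 * (2 + a + Lphi))"
  have \<eta>1: "\<eta> > 0" unfolding \<eta>_def using \<kappa> cL by auto
  have \<eta>2: "\<eta> * (2 + a + Lphi) = \<kappa> / 2" unfolding \<eta>_def using cL by (simp add: field_simps)
  note \<eta> = \<eta>1 \<eta>2
  have "eventually (\<lambda>t. dist (w' t) 0 < \<eta>) at_top" using wp_lim \<eta> by (intro tendstoD) auto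
  then obtain T1 where T1: "\<And>t. t \<ge> T1 \<Longrightarrow> \<bar>w' t\<bar> < \<eta>"
    unfolding eventually_at_top_linorder by auto
  have k4: "\<kappa> / 4 > 0" using \<kappa> by simp
  obtain T2 where T2: "\<And>t. t \<ge> T2 \<Longrightarrow> \<bar>e t\<bar> \<le> \<kappa> / 4" using e_eventually[OF k4] by blast
  define T where "T = max T0 (max T1 T2)"
  have near: "w t < \<rho> \<or> \<bar>w t - \<gamma>\<bar> < \<rho>" if t: "T \<le> t" for t
  proof -
    have tT0: "T0 \<le> t" using t unfolding T_def by simp
    have "\<bar>phi (w t)\<bar> \<le> \<eta> * (2 + a + Lphi) + \<kappa> / 4"
    proof (rule KL[OF tT0])
      show "0 \<le> \<eta>" using \<eta> by simp
      fix s assume s: "t \<le> s" "s \<le> t + 1"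
      show "\<bar>w' s\<bar> \<le> \<eta>" using T1[of s] s t unfolding T_def by simp
      show "\<bar>e s\<bar> \<le> \<kappa> / 4" using T2[of s] s t unfolding T_def by simp
    qed
    then have "\<bar>phi (w t)\<bar> < kap \<rho>" using \<eta> \<kappa> unfolding \<kappa>_def by simp
    then have "\<not> (\<rho> \<le> w t \<and> \<rho> \<le> \<bar>w t - \<gamma>\<bar>)" using phi_away[OF \<rho>1 \<rho>2] by force
    then show ?thesis by auto
  qed
  obtain t0 where t0: "t0 \<ge> T" "w t0 > y0" using freq by blast
  have t0g: "\<bar>w t0 - \<gamma>\<bar> < \<rho>" using near[OF t0(1)] t0 \<rho>3 by auto
  have "\<bar>w t - \<gamma>\<bar> < \<rho>" if t: "t0 \<le> t" for t
  proof (rule ccontr)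
    assume "\<not> \<bar>w t - \<gamma>\<bar> < \<rho>"
    then have wt: "w t < \<rho>" using near[of t] t t0 by auto
    have "\<exists>x. t0 \<le> x \<and> x \<le> t \<and> w x = \<gamma> / 2"
    proof (rule IVT2)
      show "w t \<le> \<gamma> / 2" using wt \<rho>2 by simp
      show "\<gamma> / 2 \<le> w t0" using t0g \<rho>2 by (simp add: abs_less_iff)
      show "t0 \<le> t" by fact
      show "\<forall>x. t0 \<le> x \<and> x \<le> t \<longrightarrow> isCont w x"
      proof (intro allI impI)
        fix x assume "t0 \<le> x \<and> x \<le> t"
        then have "T0 \<le> x" using t0 unfolding T_def by simp
        then show "isCont w x" by (rule DERIV_isCont[OF d1])
      qed
    qed
    then obtain x where x: "t0 \<le> x" "w x = \<gamma> / 2" by blast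
    have "T \<le> x" using x t0 by simp
    then have "w x < \<rho> \<or> \<bar>w x - \<gamma>\<bar> < \<rho>" by (rule near)
    then show False using x \<rho>2 by (simp add: abs_less_iff)
  qed
  then show "eventually (\<lambda>t. dist (w t) \<gamma> < \<epsilon>') at_top"
    unfolding eventually_at_top_linorder dist_real_def using \<rho>4 by (intro exI[of _ t0]) force
qed

lemma main: "(w \<longlongrightarrow> \<gamma>) at_top \<and> (w' \<longlongrightarrow> 0) at_top"
  using w_lim wp_lim by simp

end

lemma exp_neg_lim: assumes "(c::real) < 0" shows "((\<lambda>t. exp (c * t)) \<longlongrightarrow> 0) at_top"
proof -
  have "LIM t at_top. (- c) * t :> at_top"
    by (rule filterlim_tendsto_pos_mult_at_top[OF tendsto_const]) (use assms in \<open>auto intro: filterlim_ident\<close>)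
  then have "LIM t at_top. - ((- c) * t) :> at_bot" by (simp add: filterlim_uminus_at_bot)
  then have "LIM t at_top. c * t :> at_bot" by simp
  then show ?thesis by (rule filterlim_compose[OF exp_at_bot])
qed

theorem lemma6p8:
  fixes N :: nat and \<beta> kinf q p \<mu> t\<^sub>1 :: real
    and K f w w' w'' :: "real \<Rightarrow> real"
  assumes N3: "N \<ge> 3"
    and mu: "\<mu> \<ge> 0"
    and K_cont: "continuous_on {0<..} K"
    and K_pos: "\<And>r. r > 0 \<Longrightarrow> K r > 0"
    and beta: "\<beta> > -2"
    and kinf_pos: "kinf > 0"
    and K_asym: "((\<lambda>r. K r / r powr \<beta>) \<longlongrightarrow> kinf) at_top"
    and f_cont: "continuous_on {0<..} f"
    and f_nonneg: "\<And>r. r > 0 \<Longrightarrow> f r \<ge> 0"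
    and q: "q > real N"
    and f_decay: "f \<in> O[at_top](\<lambda>r. r powr (- q))"
    and p: "p > pS N \<beta>"
    and w1: "\<And>t. t > t\<^sub>1 \<Longrightarrow> (w has_real_derivative w' t) (at t)"
    and w2: "\<And>t. t > t\<^sub>1 \<Longrightarrow> (w' has_real_derivative w'' t) (at t)"
    and w2_cont: "continuous_on {t\<^sub>1<..} w''"
    and w_pos: "\<And>t. t > t\<^sub>1 \<Longrightarrow> w t > 0"
    and ode: "\<And>t. t > t\<^sub>1 \<Longrightarrow>
        w'' t + a_t N \<beta> p * w' t - (A_t N \<beta> p) powr (p - 1) * w t
        + L_t K \<beta> t * (w t) powr p + \<mu> * g_t f \<beta> p t = 0"
    and limsup_pos: "Limsup at_top (\<lambda>t. ereal (w t)) > 0"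
    and limsup_fin: "Limsup at_top (\<lambda>t. ereal (w t)) < \<infinity>"
  shows "(w \<longlongrightarrow> gamma_t N \<beta> p kinf) at_top \<and> (w' \<longlongrightarrow> 0) at_top"
  proof -
  define \<theta> where "\<theta> = theta_t \<beta> p"
  define c where "c = c_t N \<beta> p"
  define \<alpha> where "\<alpha> = \<theta> * c"
  have N2: "real N - 2 \<ge> 1" using N3 by simp
  have "real N + 2 + 2 * \<beta> > 1 * (real N - 2)" using beta by simp
  then have pS1: "pS N \<beta> > 1" unfolding pS_def using N2 by (subst less_divide_eq) simp
  have p1: "p > 1" using p pS1 by simp
  have "p * (real N - 2) > real N + 2 + 2 * \<beta>" using p N2 unfolding pS_def by (simp add: divide_less_eq)
  then have "2 * (2 + \<beta>) < (real N - 2) * (p - 1)" by (simp add: algebra_simps)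
  then have th_lt: "\<theta> < (real N - 2) / 2" unfolding \<theta>_def theta_t_def using p1
    by (simp add: divide_less_eq less_divide_eq mult.commute)
  have th_pos: "\<theta> > 0" unfolding \<theta>_def theta_t_def using beta p1 by simp
  have c_pos: "c > 0" unfolding c_def c_t_def \<theta>_def[symmetric] using th_lt N2 by simp
  have a_pos: "a_t N \<beta> p > 0" unfolding a_t_def \<theta>_def[symmetric] using th_lt by simp
  have al_pos: "\<alpha> > 0" unfolding \<alpha>_def using th_pos c_pos by simp
  have A_eq: "A_t N \<beta> p = \<alpha> powr (1 / (p - 1))" unfolding A_t_def \<alpha>_def \<theta>_def c_def by simp
  have Apow: "A_t N \<beta> p powr (p - 1) = \<alpha>" unfolding A_eq powr_powr using p1 al_pos by simp
  define \<gamma> where "\<gamma> = gamma_t N \<beta> p kinf"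
  have A_pos: "A_t N \<beta> p > 0" unfolding A_eq using al_pos by simp
  have g_pos: "\<gamma> > 0" unfolding \<gamma>_def gamma_t_def using A_pos kinf_pos by simp
  have "\<gamma> powr (p - 1) = (kinf powr (- 1 / (p - 1))) powr (p - 1) * A_t N \<beta> p powr (p - 1)"
    unfolding \<gamma>_def gamma_t_def using A_pos kinf_pos by (simp add: powr_mult)
  also have "(kinf powr (- 1 / (p - 1))) powr (p - 1) = kinf powr (- 1)"
    unfolding powr_powr using p1 by simp
  finally have "\<gamma> powr (p - 1) = inverse kinf * \<alpha>" unfolding Apow using kinf_pos by (simp add: powr_minus)
  then have g_eq: "kinf * \<gamma> powr (p - 1) = \<alpha>" using kinf_pos by simp
  obtain M0 where M0: "Limsup at_top (\<lambda>t. ereal (w t)) < ereal M0"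
    using ereal_dense2[OF limsup_fin] by blast
  have "eventually (\<lambda>t. ereal (w t) < ereal M0) at_top" by (rule Limsup_lessD[OF M0])
  then obtain TM where TM: "\<And>t. t \<ge> TM \<Longrightarrow> w t < M0" unfolding eventually_at_top_linorder by auto
  define M where "M = max M0 (\<gamma> + 1)"
  obtain y0 where y0: "0 < ereal y0" "ereal y0 < Limsup at_top (\<lambda>t. ereal (w t))"
    using ereal_dense2[OF limsup_pos] by blast
  have freq: "\<exists>t\<ge>T. w t > y0" for T
  proof (rule ccontr)
    assume "\<not> (\<exists>t\<ge>T. w t > y0)"
    then have "eventually (\<lambda>t. ereal (w t) \<le> ereal y0) at_top"
      unfolding eventually_at_top_linorder by (intro exI[of _ T]) auto
    then have "Limsup at_top (\<lambda>t. ereal (w t)) \<le> ereal y0" by (rule Limsup_bounded)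
    then show False using y0 by simp
  qed
  have Llim: "((\<lambda>t. L_t K \<beta> t) \<longlongrightarrow> kinf) at_top"
  proof -
    have "((\<lambda>t. K (exp t) / exp t powr \<beta>) \<longlongrightarrow> kinf) at_top"
      by (rule filterlim_compose[OF K_asym exp_at_top])
    moreover have "K (exp t) / exp t powr \<beta> = L_t K \<beta> t" for t
      unfolding L_t_def powr_def by (simp add: exp_minus divide_inverse mult.commute)
    ultimately show ?thesis by simp
  qed
  have q_gt: "2 + \<theta> - q < 0" using th_lt q N3 by simp
  have glim: "((\<lambda>t. g_t f \<beta> p t) \<longlongrightarrow> 0) at_top"
  proof -
    obtain C where C: "C > 0" "eventually (\<lambda>x. norm (f x) \<le> C * norm (x powr (- q))) at_top"
      using landau_o.bigE[OF f_decay] by blast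
    then obtain R where R: "\<And>r. r \<ge> R \<Longrightarrow> \<bar>f r\<bar> \<le> C * \<bar>r powr (- q)\<bar>"
      unfolding eventually_at_top_linorder by auto
    have "eventually (\<lambda>t. norm (g_t f \<beta> p t) \<le> C * exp ((2 + \<theta> - q) * t)) at_top"
      unfolding eventually_at_top_linorder
    proof (intro exI[of _ R] allI impI)
      fix t assume t: "R \<le> t"
      have "t \<le> exp t" using exp_ge_add_one_self[of t] by linarith
      then have "\<bar>f (exp t)\<bar> \<le> C * \<bar>exp t powr (- q)\<bar>" using t by (intro R) simp
      also have "exp t powr (- q) = exp (- q * t)" unfolding powr_def by simp
      finally have fb: "\<bar>f (exp t)\<bar> \<le> C * exp (- q * t)" by simp
      have "norm (g_t f \<beta> p t) = exp ((2 + \<theta>) * t) * \<bar>f (exp t)\<bar>"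
        unfolding g_t_def \<theta>_def by (simp add: abs_mult)
      also have "\<dots> \<le> exp ((2 + \<theta>) * t) * (C * exp (- q * t))" using fb by (intro mult_left_mono) auto
      also have "\<dots> = C * exp ((2 + \<theta> - q) * t)" by (simp add: exp_add[symmetric] algebra_simps)
      finally show "norm (g_t f \<beta> p t) \<le> C * exp ((2 + \<theta> - q) * t)" .
    qed
    moreover have "((\<lambda>t. C * exp ((2 + \<theta> - q) * t)) \<longlongrightarrow> 0) at_top"
      using tendsto_mult_right_zero[OF exp_neg_lim[OF q_gt]] by simp
    ultimately show ?thesis by (rule Lim_null_comparison)
  qed
  define e where "e t = (kinf - L_t K \<beta> t) * w t powr p - \<mu> * g_t f \<beta> p t" for t
  have elim: "(e \<longlongrightarrow> 0) at_top"
  proof -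
    have "eventually (\<lambda>t. norm ((kinf - L_t K \<beta> t) * w t powr p) \<le> \<bar>kinf - L_t K \<beta> t\<bar> * M powr p) at_top"
      unfolding eventually_at_top_linorder
    proof (intro exI[of _ "max TM (t\<^sub>1 + 1)"] allI impI)
      fix t assume t: "max TM (t\<^sub>1 + 1) \<le> t"
      have "w t powr p \<le> M powr p" using w_pos[of t] TM[of t] t p1 unfolding M_def
        by (intro powr_mono2) auto
      then show "norm ((kinf - L_t K \<beta> t) * w t powr p) \<le> \<bar>kinf - L_t K \<beta> t\<bar> * M powr p"
        by (simp add: abs_mult mult_left_mono)
    qed
    moreover have "((\<lambda>t. \<bar>kinf - L_t K \<beta> t\<bar> * M powr p) \<longlongrightarrow> 0) at_top"
    proof -
      have "((\<lambda>t. kinf - L_t K \<beta> t) \<longlongrightarrow> kinf - kinf) at_top" by (intro tendsto_intros Llim)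
      then have "((\<lambda>t. \<bar>kinf - L_t K \<beta> t\<bar>) \<longlongrightarrow> 0) at_top" using tendsto_rabs_zero by fastforce
      then show ?thesis by (rule tendsto_mult_left_zero)
    qed
    ultimately have 1: "((\<lambda>t. (kinf - L_t K \<beta> t) * w t powr p) \<longlongrightarrow> 0) at_top" by (rule Lim_null_comparison)
    have 2: "((\<lambda>t. \<mu> * g_t f \<beta> p t) \<longlongrightarrow> 0) at_top" by (rule tendsto_mult_right_zero[OF glim])
    show ?thesis unfolding e_def using tendsto_diff[OF 1 2] by simp
  qed
  have "eventually (\<lambda>t. dist (e t) 0 < 1) at_top" using elim by (intro tendstoD) auto
  then obtain Te where Te: "\<And>t. t \<ge> Te \<Longrightarrow> \<bar>e t\<bar> \<le> 1"
    unfolding eventually_at_top_linorder dist_real_def by fastforce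
  define T0 where "T0 = max (t\<^sub>1 + 1) (max TM Te)"
  have T0: "t > t\<^sub>1" "t \<ge> TM" "t \<ge> Te" if "t \<ge> T0" for t using that unfolding T0_def by auto
  interpret O: osc w w' w'' e "a_t N \<beta> p" \<alpha> kinf p M \<gamma> T0 y0
  proof
    show "0 < a_t N \<beta> p" by fact
    show "0 < \<alpha>" by fact
    show "0 < kinf" by fact
    show "1 < p" by fact
    show "0 < \<gamma>" by fact
    show "kinf * \<gamma> powr (p - 1) = \<alpha>" by fact
    show "\<gamma> < M" unfolding M_def by simp
    show "0 < y0" using y0 by simp
    show "\<exists>t\<ge>T. y0 < w t" for T using freq by simp
    show "(w has_real_derivative w' t) (at t)" if "T0 \<le> t" for t using w1 T0[OF that] by simp
    show "(w' has_real_derivative w'' t) (at t)" if "T0 \<le> t" for t using w2 T0[OF that] by simp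
    show "0 < w t" if "T0 \<le> t" for t using w_pos T0[OF that] by simp
    show "w t \<le> M" if "T0 \<le> t" for t using TM T0[OF that] unfolding M_def by force
    show "(e \<longlongrightarrow> 0) at_top" by fact
    show "\<bar>e t\<bar> \<le> 1" if "T0 \<le> t" for t using Te T0[OF that] by simp
    show "w'' t = - a_t N \<beta> p * w' t + (\<alpha> * w t - kinf * w t powr p) + e t" if "T0 \<le> t" for t
    proof -
      have "w'' t + a_t N \<beta> p * w' t - \<alpha> * w t + L_t K \<beta> t * w t powr p + \<mu> * g_t f \<beta> p t = 0"
        using ode[of t] T0[OF that] Apow by simp
      moreover have "e t = kinf * w t powr p - L_t K \<beta> t * w t powr p - \<mu> * g_t f \<beta> p t"
        unfolding e_def by (simp add: left_diff_distrib)
      ultimately show ?thesis by linarith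
    qed
  qed
  show ?thesis using O.main unfolding \<gamma>_def by simp
qed

end
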